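(* For all $n\ge0$, \[ c_n^2=c_n+2\sum_{k=0}^{n-3}\sum_{r=3}^{n-k}p_{r-1}c_k c_{n-k-r}^2 . \]
   Context: The Narayana's cows numbers $c_n$ are defined by $c_n=\delta_{n,0}+c_{n-1}+c_{n-3}$ for $n\ge0$, $c_n=0$ for $n<0$. The Padovan numbers $p_n$ are defined by $p_n=\delta_{n,0}+p_{n-2}+p_{n-3}$ for $n\ge0$, $p_n=0$ for $n<0$. $\delta_{i,j}$ is $1$ if $i=j$ and $0$ otherwise. Empty sums are $0$. *)

theory Defs
  imports Main
begin

text \<open>Narayana's cows numbers: c 0 = 1, c n = c (n-1) + c (n-3), with c of negative index = 0.\<close>
fun cows :: "nat \<Rightarrow> nat" where
  "cows 0 = 1"
| "cows (Suc 0) = 1"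
| "cows (Suc (Suc 0)) = 1"
| "cows (Suc (Suc (Suc n))) = cows (Suc (Suc n)) + cows n"

text \<open>Padovan numbers: p 0 = 1, p n = p (n-2) + p (n-3), with p of negative index = 0.\<close>
fun padovan :: "nat \<Rightarrow> nat" where
  "padovan 0 = 1"
| "padovan (Suc 0) = 0"
| "padovan (Suc (Suc 0)) = 1"
| "padovan (Suc (Suc (Suc n))) = padovan (Suc n) + padovan n"

end

theory Submission
  imports Defs "HOL-Computational_Algebra.Formal_Power_Series"
begin

lemma Xp_nth [simp]: "fps_nth (fps_X^k * (f::int fps)) n = (if n < k then 0 else fps_nth f (n - k))"
  by (rule fps_X_power_mult_nth)

lemma cows_small [simp]: "cows 0 = 1" "cows 1 = 1" "cows 2 = 1" "cows 3 = 2" "cows 4 = 3" "cows 5 = 4"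
  by (simp_all add: eval_nat_numeral)

lemma pad_small [simp]: "padovan 0 = 1" "padovan 1 = 0" "padovan 2 = 1" "padovan 3 = 1"
  by (simp_all add: eval_nat_numeral)

lemma num_nth [simp]: "fps_nth (numeral k * (f::int fps)) n = numeral k * fps_nth f n"
  by (simp add: numeral_fps_const)

definition CC :: "int fps" where "CC = Abs_fps (\<lambda>n. int (cows n))"
definition PP :: "int fps" where "PP = Abs_fps (\<lambda>n. int (padovan n))"
definition DD :: "int fps" where "DD = Abs_fps (\<lambda>n. int (cows n)^2)"
definition QQ :: "int fps" where
  "QQ = Abs_fps (\<lambda>r. if 3 \<le> r then int (padovan (r - 1)) else 0)"

lemma CC_rec: "CC - fps_X * CC - fps_X^3 * CC = 1"
proof (rule fps_ext)
  fix n
  show "fps_nth (CC - fps_X * CC - fps_X^3 * CC) n = fps_nth (1::int fps) n"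
    by (cases n rule: cows.cases) (auto simp: CC_def fps_X_power_mult_nth)
qed

lemma PP_rec: "PP - fps_X^2 * PP - fps_X^3 * PP = 1"
proof (rule fps_ext)
  fix n
  show "fps_nth (PP - fps_X^2 * PP - fps_X^3 * PP) n = fps_nth (1::int fps) n"
  proof (cases "n < 3")
    case True
    then have "n = 0 \<or> n = 1 \<or> n = 2" by auto
    then show ?thesis by (auto simp: PP_def)
  next
    case False
    then obtain m where m: "n = m + 3" by (metis add.commute le_Suc_ex not_less)
    have "padovan (m+3) = padovan (m+1) + padovan m" by (simp add: numeral_eq_Suc)
    then show ?thesis by (simp add: m PP_def)
  qed
qed

lemma cows_sq_rec:
  "int (cows (m+6))^2 = int (cows (m+5))^2 + int (cows (m+4))^2 + 3 * int (cows (m+3))^2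
    + int (cows (m+2))^2 - int (cows (m+1))^2 - int (cows m)^2"
proof -
  have e3: "cows (m+3) = cows (m+2) + cows m" by (simp add: numeral_eq_Suc)
  have e4: "cows (m+4) = cows (m+3) + cows (m+1)" by (simp add: numeral_eq_Suc)
  have e5: "cows (m+5) = cows (m+4) + cows (m+2)" by (simp add: numeral_eq_Suc)
  have e6: "cows (m+6) = cows (m+5) + cows (m+3)" by (simp add: numeral_eq_Suc)
  show ?thesis unfolding e6 e5 e4 e3 by (simp add: algebra_simps power2_eq_square)
qed

lemma DD_rec: "DD - fps_X * DD - fps_X^2 * DD - 3 * (fps_X^3 * DD) - fps_X^4 * DD
   + fps_X^5 * DD + fps_X^6 * DD = 1 - fps_X^2 - fps_X^3"
proof (rule fps_ext)
  fix n
  show "fps_nth (DD - fps_X * DD - fps_X^2 * DD - 3 * (fps_X^3 * DD) - fps_X^4 * DD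
   + fps_X^5 * DD + fps_X^6 * DD) n = fps_nth (1 - fps_X^2 - fps_X^3 :: int fps) n"
  proof (cases "n < 6")
    case True
    then have "n = 0 \<or> n = 1 \<or> n = 2 \<or> n = 3 \<or> n = 4 \<or> n = 5" by auto
    then show ?thesis
      by (auto simp: DD_def)
  next
    case False
    then obtain m where m: "n = m + 6" by (metis add.commute le_Suc_ex not_less)
    show ?thesis using cows_sq_rec[of m]
      by (simp add: m DD_def algebra_simps)
  qed
qed

lemma QQ_eq: "QQ = fps_X * (PP - 1)"
proof (rule fps_ext)
  fix n
  show "fps_nth QQ n = fps_nth (fps_X * (PP - 1)) n"
  proof (cases "n < 3")
    case True
    then have "n = 0 \<or> n = 1 \<or> n = 2" by auto
    then show ?thesis by (auto simp: QQ_def PP_def)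
  next
    case False
    then obtain m where m: "n = m + 3" by (metis add.commute le_Suc_ex not_less)
    show ?thesis by (simp add: m QQ_def PP_def numeral_eq_Suc)
  qed
qed

lemma main_fps: "DD - CC = 2 * CC * QQ * DD"
proof -
  define X :: "int fps" where "X = fps_X"
  define A1 where "A1 = 1 - X - X^3"
  define A2 where "A2 = 1 - X^2 - X^3"
  have hC: "CC * A1 = 1" using CC_rec unfolding A1_def X_def by (simp add: algebra_simps)
  have hP: "PP * A2 = 1" using PP_rec unfolding A2_def X_def by (simp add: algebra_simps)
  have hD: "DD * (A1 * A2 - 2 * X^3 - 2 * X^4) = A2"
    using DD_rec unfolding A1_def A2_def X_def by (simp add: algebra_simps power_numeral_reduce)
  have L: "(DD - CC) * (A1 * A2) = DD * (2 * X^3 + 2 * X^4)"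
  proof -
    have "(DD - CC) * (A1 * A2) = DD * (A1 * A2) - (CC * A1) * A2" by (simp add: algebra_simps)
    also have "\<dots> = DD * (A1 * A2) - DD * (A1 * A2 - 2 * X^3 - 2 * X^4)" using hC hD by simp
    also have "\<dots> = DD * (2 * X^3 + 2 * X^4)" by (simp add: algebra_simps)
    finally show ?thesis .
  qed
  have R: "(2 * CC * QQ * DD) * (A1 * A2) = DD * (2 * X^3 + 2 * X^4)"
  proof -
    have "(2 * CC * QQ * DD) * (A1 * A2) = 2 * X * (CC * A1) * (PP * A2 - A2) * DD"
      unfolding QQ_eq X_def by (simp add: algebra_simps)
    also have "\<dots> = 2 * X * (1 - A2) * DD" using hC hP by simp
    also have "\<dots> = DD * (2 * X^3 + 2 * X^4)" unfolding A2_def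
      by (simp add: algebra_simps power_numeral_reduce)
    finally show ?thesis .
  qed
  have nz: "A1 * A2 \<noteq> 0"
  proof -
    have "fps_nth A1 0 = 1" "fps_nth A2 0 = 1" unfolding A1_def A2_def X_def by simp_all
    then have "A1 \<noteq> 0" "A2 \<noteq> 0" by auto
    then show ?thesis by simp
  qed
  show ?thesis using L R nz by (metis mult_right_cancel)
qed

lemma inner_eq:
  "(\<Sum>j=0..m. fps_nth QQ j * g j) = (\<Sum>j=3..m. int (padovan (j - 1)) * g j)"
  by (rule sum.mono_neutral_cong_right) (auto simp: QQ_def)

lemma coeff_eq:
  "fps_nth (CC * (QQ * DD)) n = (\<Sum>k \<in> {k. k + 3 \<le> n}. \<Sum>r = 3..n - k.
           int (padovan (r - 1)) * int (cows k) * (int (cows (n - k - r)))^2)"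
proof -
  have "fps_nth (CC * (QQ * DD)) n = (\<Sum>i=0..n. int (cows i) *
      (\<Sum>j=3..n-i. int (padovan (j - 1)) * (int (cows (n - i - j)))^2))"
    by (simp add: fps_mult_nth inner_eq CC_def DD_def)
  also have "\<dots> = (\<Sum>i=0..n. (\<Sum>j=3..n-i. int (padovan (j - 1)) * int (cows i) * (int (cows (n - i - j)))^2))"
    by (simp add: sum_distrib_left algebra_simps)
  also have "\<dots> = (\<Sum>k \<in> {k. k + 3 \<le> n}. \<Sum>r = 3..n - k.
           int (padovan (r - 1)) * int (cows k) * (int (cows (n - k - r)))^2)"
  proof (rule sum.mono_neutral_cong_right)
    show "\<forall>i\<in>{0..n} - {k. k + 3 \<le> n}. (\<Sum>r = 3..n - i.
           int (padovan (r - 1)) * int (cows i) * (int (cows (n - i - r)))^2) = 0"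
    proof
      fix i assume "i \<in> {0..n} - {k. k + 3 \<le> n}"
      then have "{3..n-i} = {}" by auto
      then show "(\<Sum>r = 3..n - i.
           int (padovan (r - 1)) * int (cows i) * (int (cows (n - i - r)))^2) = 0" by simp
    qed
  qed auto
  finally show ?thesis .
qed

theorem mainTheorem16:
  fixes n :: nat
  shows "(cows n)^2 = cows n + 2 * (\<Sum>k \<in> {k. k + 3 \<le> n}. \<Sum>r = 3..n - k.
           padovan (r - 1) * cows k * (cows (n - k - r))^2)"
proof -
  have "fps_nth (DD - CC) n = fps_nth (2 * (CC * (QQ * DD))) n"
    using main_fps by (simp add: mult.assoc)
  then have "int (cows n)^2 - int (cows n) = 2 * (\<Sum>k \<in> {k. k + 3 \<le> n}. \<Sum>r = 3..n - k.
           int (padovan (r - 1)) * int (cows k) * (int (cows (n - k - r)))^2)"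
    by (simp only: fps_sub_nth num_nth coeff_eq) (simp add: CC_def DD_def)
  then have "int ((cows n)^2) = int (cows n + 2 * (\<Sum>k \<in> {k. k + 3 \<le> n}. \<Sum>r = 3..n - k.
           padovan (r - 1) * cows k * (cows (n - k - r))^2))"
    by simp
  then show ?thesis by (simp only: of_nat_eq_iff)
qed

end
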